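(* Let $\mathcal{X}$ be a convex subset of a normed space with norm $\|\cdot\|$, dual norm $\|\cdot\|_*$. For each $x\in\mathcal{X}$ let $d_x$ be a distribution on a sample space $\mathcal{S}$ and let $f(\cdot;s)$ be $\alpha$-strongly convex and differentiable on $\mathcal{X}$ for each $s$. Let $F(y,x)=\mathbb{E}_{s\sim d_y}[f(x;s)]$ and assume $\|\nabla_2F(x,z)-\nabla_2F(y,z)\|_*\le\beta\|x-y\|$ for all $x,y,z$. Given $x_1$, at iteration $n$ draw samples $s_{n,1},\dots,s_{n,m_n}$ from $d_{x_n}$, let $g_n(x)=\frac1{m_n}\sum_{k=1}^{m_n}f(x;s_{n,k})$, $f_n(x)=F(x_n,x)$, and $x_{n+1}=\arg\min_{x\in\mathcal{X}}\sum_{k=1}^ng_k(x)$. Let $\xi_n=\nabla f_n-\nabla g_n$, $\bar\xi_{n}=\frac1n\sum_{k=1}^n\xi_k$, $\theta=\beta/\alpha$, and $S_n=\frac1{n-1}\sum_{k=1}^{n-1}\|x_n-x_k\|$. Then for all $n\ge2$, $$\|x_{n+1}-x_n\|\le\frac{\theta S_n}{n}+\frac{1}{n\alpha}\left(\|\xi_n(x_n)\|_*+\|\bar\xi_{n-1}(x_n)\|_*\right).$$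
   Context: This is the stochastic (finite-sample) version of the value aggregation algorithm AggreVaTe; minimizers are assumed to exist. $\nabla_2$ denotes the gradient in the second argument. *)

theory Defs
  imports "HOL-Probability.Probability"
begin

definition strongly_convex_on :: "'a::real_normed_vector set \<Rightarrow> real \<Rightarrow> ('a \<Rightarrow> real) \<Rightarrow> bool" where
  "strongly_convex_on X \<alpha> f \<longleftrightarrow>
     (\<forall>x\<in>X. \<forall>y\<in>X. \<forall>t::real. 0 \<le> t \<and> t \<le> 1 \<longrightarrow>
        f ((1 - t) *\<^sub>R x + t *\<^sub>R y)
          \<le> (1 - t) * f x + t * f y - \<alpha> / 2 * t * (1 - t) * (norm (x - y))\<^sup>2)"

definition dual_norm :: "('a::real_normed_vector \<Rightarrow> real) \<Rightarrow> real" where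
  "dual_norm L = onorm L"

end

theory Submission
  imports Defs
begin

lemma deriv_bound:
  fixes \<phi> :: "real \<Rightarrow> real"
  assumes d: "(\<phi> has_real_derivative d) (at 0 within {0..1})"
    and le: "\<And>t. 0 < t \<Longrightarrow> t \<le> 1 \<Longrightarrow> \<phi> t - \<phi> 0 \<le> t*b + t*t*e"
  shows "d \<le> b"
proof -
  have l1: "((\<lambda>t. (\<phi> t - \<phi> 0) / (t - 0)) \<longlongrightarrow> d) (at_right 0)"
    using d unfolding has_field_derivative_iff by (simp add: at_within_Icc_at_right)
  have l2: "((\<lambda>t. b + t*e) \<longlongrightarrow> b + 0*e) (at_right 0)"
    by (intro tendsto_intros)
  have ev: "eventually (\<lambda>t. (\<phi> t - \<phi> 0) / (t - 0) \<le> b + t*e) (at_right (0::real))"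
    unfolding eventually_at_right[of 0 "1::real", simplified]
  proof (intro exI[of _ 1] conjI allI impI)
    fix t :: real assume "0 < t" "t < 1"
    with le[of t] show "(\<phi> t - \<phi> 0) / (t - 0) \<le> b + t*e"
      by (simp add: divide_le_eq algebra_simps)
  qed simp
  show ?thesis using tendsto_le[OF _ l2 l1 ev] by simp
qed

lemma dir_deriv:
  fixes G :: "'a::real_normed_vector \<Rightarrow> real"
  assumes X: "convex X" and z: "z \<in> X" and y: "y \<in> X"
    and G: "(G has_derivative D) (at z within X)"
  shows "((\<lambda>t. G (z + t *\<^sub>R (y - z))) has_real_derivative D (y - z)) (at 0 within {0..1})"
proof -
  interpret D: bounded_linear D using has_derivative_bounded_linear[OF G] .
  let ?h = "\<lambda>t::real. z + t *\<^sub>R (y - z)"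
  have h: "(?h has_derivative (\<lambda>t. t *\<^sub>R (y - z))) (at 0 within {0..1})"
    by (auto intro!: derivative_eq_intros)
  have sub: "?h ` {0..1} \<subseteq> X"
  proof
    fix w assume "w \<in> ?h ` {0..1}"
    then obtain t where t: "0 \<le> t" "t \<le> 1" "w = ?h t" by auto
    have "w = (1 - t) *\<^sub>R z + t *\<^sub>R y" using t by (simp add: algebra_simps)
    then show "w \<in> X" using X z y t unfolding convex_alt by auto
  qed
  have G': "(G has_derivative D) (at (?h 0) within (?h ` {0..1}))"
    using has_derivative_subset[OF G sub] by simp
  have "((\<lambda>t. G (?h t)) has_derivative (\<lambda>t. D (t *\<^sub>R (y - z)))) (at 0 within {0..1})"
    by (rule has_derivative_in_compose[OF h G'])
  moreover have "(\<lambda>t. D (t *\<^sub>R (y - z))) = (*) (D (y - z))"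
    by (auto simp: D.scale)
  ultimately show ?thesis unfolding has_field_derivative_def by simp
qed

lemma sc_first_order:
  fixes G :: "'a::real_normed_vector \<Rightarrow> real"
  assumes X: "convex X" and sc: "strongly_convex_on X c G" and z: "z \<in> X" and y: "y \<in> X"
    and G: "(G has_derivative D) (at z within X)"
  shows "G y \<ge> G z + D (y - z) + c/2 * (norm (y - z))\<^sup>2"
proof -
  have "D (y - z) \<le> G y - G z - c/2 * (norm (y - z))\<^sup>2"
  proof (rule deriv_bound[OF dir_deriv[OF X z y G], where e = "c/2 * (norm (y - z))\<^sup>2"])
    fix t :: real assume t: "0 < t" "t \<le> 1"
    have eq: "z + t *\<^sub>R (y - z) = (1 - t) *\<^sub>R z + t *\<^sub>R y" by (simp add: algebra_simps)
    have "G ((1 - t) *\<^sub>R z + t *\<^sub>R y) \<le> (1 - t) * G z + t * G y - c / 2 * t * (1 - t) * (norm (z - y))\<^sup>2"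
      using sc z y t unfolding strongly_convex_on_def by auto
    then show "G (z + t *\<^sub>R (y - z)) - G (z + 0 *\<^sub>R (y - z))
        \<le> t * (G y - G z - c / 2 * (norm (y - z))\<^sup>2) + t * t * (c / 2 * (norm (y - z))\<^sup>2)"
    proof -
      define N where "N = (norm (y - z))\<^sup>2"
      have h: "G (z + t *\<^sub>R (y - z)) \<le> (1 - t) * G z + t * G y - c / 2 * t * (1 - t) * N"
        using \<open>G ((1 - t) *\<^sub>R z + t *\<^sub>R y) \<le> _\<close> unfolding eq N_def by (simp add: norm_minus_commute)
      have e: "(1 - t) * G z + t * G y - c / 2 * t * (1 - t) * N - G z = t * (G y - G z - c / 2 * N) + t * t * (c / 2 * N)"
        by (simp add: field_simps)
      show ?thesis using h e unfolding N_def[symmetric] by simp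
    qed
  qed
  then show ?thesis by simp
qed

lemma min_first_order:
  fixes G :: "'a::real_normed_vector \<Rightarrow> real"
  assumes X: "convex X" and z: "z \<in> X" and y: "y \<in> X" and mn: "\<forall>w\<in>X. G z \<le> G w"
    and G: "(G has_derivative D) (at z within X)"
  shows "D (y - z) \<ge> 0"
proof -
  have sub: "z + t *\<^sub>R (y - z) \<in> X" if "0 \<le> t" "t \<le> 1" for t
  proof -
    have "z + t *\<^sub>R (y - z) = (1 - t) *\<^sub>R z + t *\<^sub>R y" by (simp add: algebra_simps)
    then show ?thesis using X z y that unfolding convex_alt by auto
  qed
  have "- D (y - z) \<le> 0"
  proof (rule deriv_bound[OF DERIV_minus[OF dir_deriv[OF X z y G]], where e = 0])
    fix t :: real assume t: "0 < t" "t \<le> 1"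
    then show "- G (z + t *\<^sub>R (y - z)) - - G (z + 0 *\<^sub>R (y - z)) \<le> t * 0 + t * t * 0"
      using mn sub[of t] by auto
  qed
  then show ?thesis by simp
qed

lemma sc_zero: "strongly_convex_on X 0 (\<lambda>_. 0)"
  unfolding strongly_convex_on_def by simp

lemma sc_add:
  assumes "strongly_convex_on X a f" "strongly_convex_on X b g"
  shows "strongly_convex_on X (a + b) (\<lambda>x. f x + g x)"
  using assms unfolding strongly_convex_on_def
  apply (intro ballI allI impI)
  subgoal for x y t
    apply (drule bspec[of _ _ x], assumption, drule bspec[of _ _ y], assumption, drule spec[of _ t])
    apply (drule bspec[of _ _ x], assumption, drule bspec[of _ _ y], assumption, drule spec[of _ t])
    by (simp add: algebra_simps add_divide_distrib)
  done

lemma sc_scale: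
  assumes "strongly_convex_on X a f" "c \<ge> 0"
  shows "strongly_convex_on X (c * a) (\<lambda>x. c * f x)"
  unfolding strongly_convex_on_def
proof (intro ballI allI impI)
  fix x y t assume xy: "x \<in> X" "y \<in> X" and t: "0 \<le> t \<and> t \<le> (1::real)"
  have "f ((1 - t) *\<^sub>R x + t *\<^sub>R y) \<le> (1 - t) * f x + t * f y - a / 2 * t * (1 - t) * (norm (x - y))\<^sup>2"
    using assms(1) xy t unfolding strongly_convex_on_def by auto
  from mult_left_mono[OF this assms(2)]
  show "c * f ((1 - t) *\<^sub>R x + t *\<^sub>R y) \<le> (1 - t) * (c * f x) + t * (c * f y) - c * a / 2 * t * (1 - t) * (norm (x - y))\<^sup>2"
    by (simp add: algebra_simps)
qed

lemma sc_sum: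
  assumes "finite I" "\<And>i. i \<in> I \<Longrightarrow> strongly_convex_on X (a i) (f i)"
  shows "strongly_convex_on X (\<Sum>i\<in>I. a i) (\<lambda>x. \<Sum>i\<in>I. f i x)"
  using assms
proof (induction I rule: finite_induct)
  case empty then show ?case using sc_zero by simp
next
  case (insert i I)
  then show ?case using sc_add[of X "a i" "f i" "sum a I" "\<lambda>x. \<Sum>i\<in>I. f i x"] by simp
qed

theorem lemma11:
  fixes X :: "'a::real_normed_vector set"
    and d :: "'a \<Rightarrow> 's measure"
    and f :: "'a \<Rightarrow> 's \<Rightarrow> real"
    and Df :: "'s \<Rightarrow> 'a \<Rightarrow> ('a \<Rightarrow> real)"
    and DF :: "'a \<Rightarrow> 'a \<Rightarrow> ('a \<Rightarrow> real)"
    and \<alpha> \<beta> :: real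
    and x :: "nat \<Rightarrow> 'a"
    and m :: "nat \<Rightarrow> nat"
    and s :: "nat \<Rightarrow> nat \<Rightarrow> 's"
    and n :: nat
  assumes X_convex: "convex X"
    and alpha_pos: "\<alpha> > 0"
    and prob: "\<And>y. y \<in> X \<Longrightarrow> prob_space (d y)"
    and integrable: "\<And>y z. y \<in> X \<Longrightarrow> z \<in> X \<Longrightarrow> integrable (d y) (f z)"
    and strongly_convex: "\<And>\<sigma>. strongly_convex_on X \<alpha> (\<lambda>z. f z \<sigma>)"
    and f_deriv: "\<And>\<sigma> z. z \<in> X \<Longrightarrow> ((\<lambda>w. f w \<sigma>) has_derivative Df \<sigma> z) (at z within X)"
    and F_deriv: "\<And>y z. y \<in> X \<Longrightarrow> z \<in> X \<Longrightarrow>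
        ((\<lambda>w. \<integral>\<sigma>. f w \<sigma> \<partial>(d y)) has_derivative DF y z) (at z within X)"
    and F_lipschitz: "\<And>y y' z. y \<in> X \<Longrightarrow> y' \<in> X \<Longrightarrow> z \<in> X \<Longrightarrow>
        dual_norm (\<lambda>v. DF y z v - DF y' z v) \<le> \<beta> * norm (y - y')"
    and x1: "x 1 \<in> X"
    and m_pos: "\<And>k. k \<ge> 1 \<Longrightarrow> m k \<ge> 1"
    and samples: "\<And>k i. k \<ge> 1 \<Longrightarrow> 1 \<le> i \<Longrightarrow> i \<le> m k \<Longrightarrow> s k i \<in> space (d (x k))"
    and x_step: "\<And>k. k \<ge> 1 \<Longrightarrow> x (Suc k) \<in> X \<and>
        (\<forall>y\<in>X. (\<Sum>j=1..k. (1 / real (m j)) * (\<Sum>i=1..m j. f (x (Suc k)) (s j i)))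
               \<le> (\<Sum>j=1..k. (1 / real (m j)) * (\<Sum>i=1..m j. f y (s j i))))"
    and n_ge: "n \<ge> 2"
  shows "let \<xi> = (\<lambda>k z v. DF (x k) z v - (1 / real (m k)) * (\<Sum>i=1..m k. Df (s k i) z v));
             \<xi>bar = (\<lambda>j z v. (1 / real j) * (\<Sum>k=1..j. \<xi> k z v));
             \<theta> = \<beta> / \<alpha>;
             S = (1 / real (n - 1)) * (\<Sum>k=1..n-1. norm (x n - x k))
         in norm (x (Suc n) - x n)
              \<le> \<theta> * S / real n
                + 1 / (real n * \<alpha>) * (dual_norm (\<xi> n (x n)) + dual_norm (\<xi>bar (n - 1) (x n)))"
proof -
  obtain p where np: "n = Suc p" and p1: "p \<ge> 1" using n_ge by (cases n) auto
  have xs: "x k \<in> X" if "k \<ge> 1" for k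
    using that
  proof (induction k)
    case 0 then show ?case by simp
  next
    case (Suc k) then show ?case using x1 x_step[of k] by (cases "k = 0") auto
  qed
  define g where "g = (\<lambda>j w. (1 / real (m j)) * (\<Sum>i=1..m j. f w (s j i)))"
  define G where "G = (\<lambda>K w. \<Sum>j=1..K. g j w)"
  define Dg where "Dg = (\<lambda>j w v. (1 / real (m j)) * (\<Sum>i=1..m j. Df (s j i) w v))"
  define DG where "DG = (\<lambda>K w v. \<Sum>j=1..K. Dg j w v)"
  have Gd: "(G K has_derivative DG K w) (at w within X)" if "w \<in> X" for K w
    unfolding G_def DG_def g_def Dg_def
    by (intro has_derivative_sum has_derivative_mult_right f_deriv that)
  have bl_Df: "bounded_linear (Df \<sigma> w)" if "w \<in> X" for \<sigma> w
    using has_derivative_bounded_linear[OF f_deriv[OF that]] .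
  have bl_DF: "bounded_linear (DF y w)" if "y \<in> X" "w \<in> X" for y w
    using has_derivative_bounded_linear[OF F_deriv[OF that]] .
  have bl_Dg: "bounded_linear (Dg j w)" if "w \<in> X" for j w
    unfolding Dg_def
    by (intro bounded_linear_const_mult bounded_linear_sum bl_Df that)
  have scg: "strongly_convex_on X \<alpha> (g j)" if "j \<ge> 1" for j
  proof -
    have "strongly_convex_on X (\<Sum>i=1..m j. \<alpha>) (\<lambda>w. \<Sum>i=1..m j. f w (s j i))"
      by (rule sc_sum) (auto intro: strongly_convex)
    from sc_scale[OF this, of "1 / real (m j)"]
    have "strongly_convex_on X (1 / real (m j) * (real (m j) * \<alpha>)) (g j)"
      unfolding g_def by simp
    moreover have "1 / real (m j) * (real (m j) * \<alpha>) = \<alpha>" using m_pos[OF that] by simp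
    ultimately show ?thesis by simp
  qed
  have scG: "strongly_convex_on X (real K * \<alpha>) (G K)" for K
  proof -
    have "strongly_convex_on X (\<Sum>j=1..K. \<alpha>) (\<lambda>w. \<Sum>j=1..K. g j w)"
      by (rule sc_sum) (auto intro: scg)
    then show ?thesis unfolding G_def by simp
  qed
  define z where "z = x n"
  define y where "y = x (Suc n)"
  define \<delta> where "\<delta> = y - z"
  have zX: "z \<in> X" unfolding z_def using np by (intro xs) simp
  have yX: "y \<in> X" unfolding y_def by (intro xs) simp
  have ymin: "\<forall>w\<in>X. G n y \<le> G n w"
    using x_step[of n] n_ge unfolding y_def G_def g_def by simp
  have zmin: "\<forall>w\<in>X. G p z \<le> G p w"
    using x_step[of p] p1 unfolding z_def G_def g_def np by simp
  have s1: "G n y \<ge> G n z + DG n z \<delta> + real n * \<alpha> / 2 * (norm \<delta>)\<^sup>2"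
    using sc_first_order[OF X_convex scG zX yX Gd[OF zX]] unfolding \<delta>_def by simp
  have s2a: "DG n y (z - y) \<ge> 0"
    by (rule min_first_order[OF X_convex yX zX ymin Gd[OF yX]])
  have s2: "G n z \<ge> G n y + DG n y (z - y) + real n * \<alpha> / 2 * (norm \<delta>)\<^sup>2"
    using sc_first_order[OF X_convex scG yX zX Gd[OF yX]] unfolding \<delta>_def
    by (simp add: norm_minus_commute)
  have s3: "DG p z \<delta> \<ge> 0"
    unfolding \<delta>_def by (rule min_first_order[OF X_convex zX yX zmin Gd[OF zX]])
  have main1: "real n * \<alpha> * (norm \<delta>)\<^sup>2 \<le> - DG n z \<delta>"
    using s1 s2 s2a by simp
  have DGsplit: "DG n z \<delta> = DG p z \<delta> + Dg n z \<delta>"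
    unfolding DG_def np by simp
  define \<xi> where "\<xi> = (\<lambda>k z v. DF (x k) z v - (1 / real (m k)) * (\<Sum>i=1..m k. Df (s k i) z v))"
  define \<xi>b where "\<xi>b = (\<lambda>j z v. (1 / real j) * (\<Sum>k=1..j. \<xi> k z v))"
  define S where "S = (1 / real (n - 1)) * (\<Sum>k=1..n-1. norm (x n - x k))"
  define E where "E = (\<Sum>k=1..p. DF (x k) z \<delta> - DF z z \<delta>)"
  have xi_eq: "\<xi> k z v = DF (x k) z v - Dg k z v" for k v
    unfolding \<xi>_def Dg_def by simp
  have id1: "DG p z \<delta> = real p * DF z z \<delta> + E - real p * \<xi>b p z \<delta>"
  proof -
    have "real p * \<xi>b p z \<delta> = (\<Sum>k=1..p. \<xi> k z \<delta>)" unfolding \<xi>b_def using p1 by simp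
    moreover have "E = (\<Sum>k=1..p. DF (x k) z \<delta>) - real p * DF z z \<delta>"
      unfolding E_def by (simp add: sum_subtractf)
    moreover have "DG p z \<delta> = (\<Sum>k=1..p. DF (x k) z \<delta>) - (\<Sum>k=1..p. \<xi> k z \<delta>)"
      unfolding DG_def xi_eq by (simp add: sum_subtractf)
    ultimately show ?thesis by simp
  qed
  have id2: "Dg n z \<delta> = DF z z \<delta> - \<xi> n z \<delta>"
    using xi_eq[of n \<delta>] unfolding z_def by simp
  have key: "real p * (real n * \<alpha> * (norm \<delta>)\<^sup>2) \<le> E - real p * \<xi>b p z \<delta> + real p * \<xi> n z \<delta>"
  proof -
    have "real p * (real n * \<alpha> * (norm \<delta>)\<^sup>2) \<le> real p * (- DG p z \<delta> - DF z z \<delta> + \<xi> n z \<delta>)"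
      using main1 DGsplit id2 by (intro mult_left_mono) auto
    also have "\<dots> = - real p * DG p z \<delta> - real p * DF z z \<delta> + real p * \<xi> n z \<delta>"
      by (simp add: algebra_simps)
    also have "\<dots> \<le> E - real p * \<xi>b p z \<delta> + real p * \<xi> n z \<delta>"
    proof -
      have "real p * DG p z \<delta> \<ge> 0" using s3 by simp
      then show ?thesis using id1 s3 by linarith
    qed
    finally show ?thesis .
  qed
  have bl_xi: "bounded_linear (\<xi> k z)" if "k \<ge> 1" for k
    unfolding \<xi>_def by (intro bounded_linear_sub bl_DF xs that zX bounded_linear_const_mult bounded_linear_sum bl_Df)
  have bl_xib: "bounded_linear (\<xi>b p z)"
    unfolding \<xi>b_def by (intro bounded_linear_const_mult bounded_linear_sum bl_xi) auto
  have b1: "\<xi> n z \<delta> \<le> dual_norm (\<xi> n z) * norm \<delta>"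
    using onorm[OF bl_xi[of n], of \<delta>] n_ge unfolding dual_norm_def by simp
  have b2: "- \<xi>b p z \<delta> \<le> dual_norm (\<xi>b p z) * norm \<delta>"
    using onorm[OF bl_xib, of \<delta>] unfolding dual_norm_def by simp
  have b3: "E \<le> \<beta> * norm \<delta> * (\<Sum>k=1..p. norm (x n - x k))"
  proof -
    have "E \<le> (\<Sum>k=1..p. \<beta> * norm \<delta> * norm (x n - x k))"
      unfolding E_def
    proof (rule sum_mono)
      fix k assume k: "k \<in> {1..p}"
      have bl: "bounded_linear (\<lambda>v. DF (x k) z v - DF z z v)"
        using k by (intro bounded_linear_sub bl_DF xs zX) auto
      have "DF (x k) z \<delta> - DF z z \<delta> \<le> dual_norm (\<lambda>v. DF (x k) z v - DF z z v) * norm \<delta>"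
        using onorm[OF bl, of \<delta>] unfolding dual_norm_def by simp
      also have "\<dots> \<le> \<beta> * norm (x k - z) * norm \<delta>"
        using F_lipschitz[of "x k" z z] k xs zX by (intro mult_right_mono) auto
      finally show "DF (x k) z \<delta> - DF z z \<delta> \<le> \<beta> * norm \<delta> * norm (x n - x k)"
        unfolding z_def by (simp add: norm_minus_commute mult_ac)
    qed
    then show ?thesis by (simp add: sum_distrib_left)
  qed
  have Seq: "(\<Sum>k=1..p. norm (x n - x k)) = real p * S"
    unfolding S_def np using p1 by simp
  have fin: "norm \<delta> \<le> \<beta> / \<alpha> * S / real n + 1 / (real n * \<alpha>) * (dual_norm (\<xi> n z) + dual_norm (\<xi>b (n - 1) z))"
  proof (cases "\<delta> = 0")
    case True
    have "0 \<le> dual_norm (\<xi> n z)" "0 \<le> dual_norm (\<xi>b p z)"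
      using onorm_pos_le bl_xi[of n] bl_xib n_ge unfolding dual_norm_def by auto
    moreover have "\<beta> * S \<ge> 0"
    proof -
      have "0 \<le> \<beta> * norm (x n - x k)" if "k \<in> {1..p}" for k
      proof -
        have bl: "bounded_linear (\<lambda>v. DF (x n) z v - DF (x k) z v)"
          using that np by (intro bounded_linear_sub bl_DF xs zX) auto
        show ?thesis using onorm_pos_le[OF bl] F_lipschitz[of "x n" "x k" z] that np xs zX
          unfolding dual_norm_def by force
      qed
      then have "0 \<le> (\<Sum>k=1..p. \<beta> * norm (x n - x k))" by (intro sum_nonneg) auto
      then have "0 \<le> \<beta> * (real p * S)" unfolding Seq[symmetric] by (simp add: sum_distrib_left)
      then have "0 \<le> real p * (\<beta> * S)" by (simp add: mult_ac)
      then show ?thesis using p1 by (simp add: zero_le_mult_iff)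
    qed
    ultimately show ?thesis using True alpha_pos n_ge np by simp
  next
    case False
    have pos: "norm \<delta> > 0" using False by simp
    have "real p * (real n * \<alpha> * (norm \<delta>)\<^sup>2) \<le> real p * (norm \<delta> * (\<beta> * S + dual_norm (\<xi> n z) + dual_norm (\<xi>b p z)))"
    proof -
      have "real p * \<xi> n z \<delta> \<le> real p * (dual_norm (\<xi> n z) * norm \<delta>)"
        using b1 by (intro mult_left_mono) auto
      moreover have "- (real p * \<xi>b p z \<delta>) \<le> real p * (dual_norm (\<xi>b p z) * norm \<delta>)"
        using mult_left_mono[OF b2, of "real p"] by simp
      ultimately show ?thesis using key b3 Seq by (simp add: algebra_simps)
    qed
    then have "real n * \<alpha> * (norm \<delta>)\<^sup>2 \<le> norm \<delta> * (\<beta> * S + dual_norm (\<xi> n z) + dual_norm (\<xi>b p z))"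
      using p1 by simp
    then have "real n * \<alpha> * norm \<delta> \<le> \<beta> * S + dual_norm (\<xi> n z) + dual_norm (\<xi>b p z)"
      using pos by (simp add: power2_eq_square mult_ac)
    then have "norm \<delta> \<le> (\<beta> * S + dual_norm (\<xi> n z) + dual_norm (\<xi>b p z)) / (real n * \<alpha>)"
      using alpha_pos n_ge by (simp add: pos_le_divide_eq mult_ac)
    moreover have "\<beta> / \<alpha> * S / real n + 1 / (real n * \<alpha>) * (dual_norm (\<xi> n z) + dual_norm (\<xi>b p z))
        = (\<beta> * S + dual_norm (\<xi> n z) + dual_norm (\<xi>b p z)) / (real n * \<alpha>)"
      using alpha_pos n_ge by (simp add: field_simps)
    ultimately show ?thesis using np by simp
  qed
  show ?thesis
    using fin unfolding Let_def \<xi>_def \<xi>b_def S_def \<delta>_def y_def z_def .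
qed

end
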